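(* Let $G$ be either (a) the grid $P_3 \,\square\, P_n$ with $n\ge 3$, or (b) the grid $P_4\,\square\, P_n$ with $n\ge 4$. Then $$\gamma_t(G) \ge \left\lceil \frac{3\gamma(G)+2\gamma_c(G)}{6}\right\rceil.$$
   Context: All graphs are finite, simple and undirected. $P_m$ denotes the path on $m$ vertices. For graphs $G,H$, the Cartesian product $G\,\square\, H$ has vertex set $V(G)\times V(H)$, with $(u_1,v_1)$ adjacent to $(u_2,v_2)$ iff either $u_1=u_2$ and $v_1v_2\in E(H)$, or $v_1=v_2$ and $u_1u_2\in E(G)$. A set $S\subseteq V(G)$ is a dominating set if every vertex not in $S$ is adjacent to some vertex of $S$; $\gamma(G)$ is the minimum size of a dominating set. A set $S$ is a total dominating set if every vertex of $G$ (including those in $S$) is adjacent to some vertex of $S$; $\gamma_t(G)$ is the minimum size of a total dominating set. A set $S$ is a connected dominating set if it is dominating and the subgraph induced by $S$ is connected; $\gamma_c(G)$ is the minimum size of a connected dominating set. *)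

theory Defs
  imports Complex_Main
begin

(* A finite simple graph is given by a vertex set V and a symmetric irreflexive
   adjacency relation E (only its restriction to V matters). *)

definition dominating :: "'a set \<Rightarrow> ('a \<Rightarrow> 'a \<Rightarrow> bool) \<Rightarrow> 'a set \<Rightarrow> bool" where
  "dominating V E S \<longleftrightarrow> S \<subseteq> V \<and> (\<forall>v\<in>V - S. \<exists>u\<in>S. E u v)"

definition total_dominating :: "'a set \<Rightarrow> ('a \<Rightarrow> 'a \<Rightarrow> bool) \<Rightarrow> 'a set \<Rightarrow> bool" where
  "total_dominating V E S \<longleftrightarrow> S \<subseteq> V \<and> (\<forall>v\<in>V. \<exists>u\<in>S. E u v)"

definition induced_connected :: "('a \<Rightarrow> 'a \<Rightarrow> bool) \<Rightarrow> 'a set \<Rightarrow> bool" where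
  "induced_connected E S \<longleftrightarrow> S \<noteq> {} \<and>
     (\<forall>x\<in>S. \<forall>y\<in>S. (\<lambda>a b. a \<in> S \<and> b \<in> S \<and> E a b)\<^sup>*\<^sup>* x y)"

definition connected_dominating :: "'a set \<Rightarrow> ('a \<Rightarrow> 'a \<Rightarrow> bool) \<Rightarrow> 'a set \<Rightarrow> bool" where
  "connected_dominating V E S \<longleftrightarrow> dominating V E S \<and> induced_connected E S"

definition domination_number :: "'a set \<Rightarrow> ('a \<Rightarrow> 'a \<Rightarrow> bool) \<Rightarrow> nat" where
  "domination_number V E = (LEAST k. \<exists>S. dominating V E S \<and> card S = k)"

definition total_domination_number :: "'a set \<Rightarrow> ('a \<Rightarrow> 'a \<Rightarrow> bool) \<Rightarrow> nat" where
  "total_domination_number V E = (LEAST k. \<exists>S. total_dominating V E S \<and> card S = k)"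

definition connected_domination_number :: "'a set \<Rightarrow> ('a \<Rightarrow> 'a \<Rightarrow> bool) \<Rightarrow> nat" where
  "connected_domination_number V E = (LEAST k. \<exists>S. connected_dominating V E S \<and> card S = k)"

definition path_verts :: "nat \<Rightarrow> nat set" where
  "path_verts m = {0..<m}"

definition path_adj :: "nat \<Rightarrow> nat \<Rightarrow> bool" where
  "path_adj i j \<longleftrightarrow> i = j + 1 \<or> j = i + 1"

definition cart_verts :: "'a set \<Rightarrow> 'b set \<Rightarrow> ('a \<times> 'b) set" where
  "cart_verts V W = V \<times> W"

definition cart_adj :: "('a \<Rightarrow> 'a \<Rightarrow> bool) \<Rightarrow> ('b \<Rightarrow> 'b \<Rightarrow> bool) \<Rightarrow> 'a \<times> 'b \<Rightarrow> 'a \<times> 'b \<Rightarrow> bool" where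
  "cart_adj E F p q \<longleftrightarrow> (fst p = fst q \<and> F (snd p) (snd q)) \<or> (snd p = snd q \<and> E (fst p) (fst q))"

definition grid_verts :: "nat \<Rightarrow> nat \<Rightarrow> (nat \<times> nat) set" where
  "grid_verts m n = cart_verts (path_verts m) (path_verts n)"

definition grid_adj :: "nat \<times> nat \<Rightarrow> nat \<times> nat \<Rightarrow> bool" where
  "grid_adj = cart_adj path_adj path_adj"

end

theory Submission
  imports Defs
begin

lemma dn_le: "dominating V E S \<Longrightarrow> domination_number V E \<le> card S"
  unfolding domination_number_def by (rule Least_le) blast

lemma cdn_le: "connected_dominating V E S \<Longrightarrow> connected_domination_number V E \<le> card S"
  unfolding connected_domination_number_def by (rule Least_le) blast

lemma tdn_ge:
  assumes "total_dominating V E S0"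
    and "\<And>S. total_dominating V E S \<Longrightarrow> L \<le> card S"
  shows "L \<le> total_domination_number V E"
proof -
  have "\<exists>k S. total_dominating V E S \<and> card S = k" using assms(1) by blast
  then have "\<exists>S. total_dominating V E S \<and> card S = total_domination_number V E"
    unfolding total_domination_number_def by (rule LeastI_ex)
  then show ?thesis using assms(2) by metis
qed

lemma adj_iff: "grid_adj (a,b) (c,d) \<longleftrightarrow> (a = c \<and> (b = d + 1 \<or> d = b + 1)) \<or> (b = d \<and> (a = c + 1 \<or> c = a + 1))"
  by (auto simp: grid_adj_def cart_adj_def path_adj_def)

lemma grid_mem: "(a,b) \<in> grid_verts m n \<longleftrightarrow> a < m \<and> b < n"
  by (auto simp: grid_verts_def cart_verts_def path_verts_def)

lemma tot_ex:
  assumes "m \<ge> 2"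
  shows "total_dominating (grid_verts m n) grid_adj (grid_verts m n)"
  unfolding total_dominating_def
proof (intro conjI ballI)
  fix v assume v: "v \<in> grid_verts m n"
  obtain a b where ab: "v = (a,b)" by fastforce
  show "\<exists>u\<in>grid_verts m n. grid_adj u v"
  proof (cases "a = 0")
    case True
    then show ?thesis using v assms ab by (intro bexI[of _ "(1,b)"]) (auto simp: adj_iff grid_mem)
  next
    case False
    then show ?thesis using v assms ab by (intro bexI[of _ "(a-1,b)"]) (auto simp: adj_iff grid_mem)
  qed
qed simp

lemma fin_sub: "S \<subseteq> grid_verts m n \<Longrightarrow> finite S"
  by (rule finite_subset) (auto simp: grid_verts_def cart_verts_def path_verts_def)

lemma cover_card:
  assumes "finite S" "B \<subseteq> (\<Union>u\<in>S. h u)" "\<And>u. u \<in> S \<Longrightarrow> card (h u) \<le> k" "\<And>u. finite (h u)"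
  shows "card B \<le> card S * k"
proof -
  have "card B \<le> card (\<Union>u\<in>S. h u)"
    using assms by (intro card_mono) auto
  also have "\<dots> \<le> (\<Sum>u\<in>S. card (h u))" using assms(1) by (rule card_UN_le)
  also have "\<dots> \<le> card S * k" using sum_bounded_above[of S "\<lambda>u. card (h u)" k] assms(3) by auto
  finally show ?thesis .
qed

definition h3 :: "nat \<times> nat \<Rightarrow> (nat \<times> nat) set" where
  "h3 v = (if fst v = 1 then {(0, snd v), (2, snd v)} else {(fst v, snd v - 1), (fst v, snd v + 1)})"

lemma lb3:
  assumes "total_dominating (grid_verts 3 n) grid_adj S"
  shows "n \<le> card S"
proof -
  have SV: "S \<subseteq> grid_verts 3 n" using assms by (simp add: total_dominating_def)
  have fin: "finite S" using SV by (rule fin_sub)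
  let ?B = "{0::nat,2} \<times> {0..<n}"
  have "?B \<subseteq> (\<Union>u\<in>S. h3 u)"
  proof
    fix b assume b: "b \<in> ?B"
    then have "b \<in> grid_verts 3 n" by (auto simp: grid_verts_def cart_verts_def path_verts_def)
    then obtain u where u: "u \<in> S" "grid_adj u b" using assms by (auto simp: total_dominating_def)
    obtain r j where bb: "b = (r,j)" by fastforce
    obtain a c where uu: "u = (a,c)" by fastforce
    have "a < 3" using u(1) SV uu by (auto simp: grid_mem)
    then have "b \<in> h3 u" using b u(2) unfolding bb uu h3_def adj_iff by auto
    then show "b \<in> (\<Union>u\<in>S. h3 u)" using u(1) by blast
  qed
  moreover have "\<And>u. card (h3 u) \<le> 2" by (simp add: h3_def card_insert_if)
  ultimately have "card ?B \<le> card S * 2"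
    using fin by (intro cover_card[where h = h3]) (auto simp: h3_def)
  then show ?thesis by (simp add: card_cartesian_product)
qed

definition hB :: "nat \<times> nat \<Rightarrow> (nat \<times> nat) set" where
  "hB v = (if fst v = 1 then {(0, snd v)} else if fst v = 2 then {(3, snd v)}
           else {(fst v, snd v - 1), (fst v, snd v + 1)})"

definition hI :: "nat \<times> nat \<Rightarrow> (nat \<times> nat) set" where
  "hI v = (if fst v = 0 then {(1, snd v)} else if fst v = 3 then {(2, snd v)}
           else if fst v > 3 then {} else {(fst v, snd v - 1), (fst v, snd v + 1), (3 - fst v, snd v)})"

lemma lb4:
  assumes "total_dominating (grid_verts 4 n) grid_adj S"
  shows "6 * n \<le> 5 * card S"
proof -
  have SV: "S \<subseteq> grid_verts 4 n" using assms by (simp add: total_dominating_def)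
  have fin: "finite S" using SV by (rule fin_sub)
  let ?B = "{0::nat,3} \<times> {0..<n}"
  let ?I = "{1::nat,2} \<times> {0..<n}"
  have cB: "?B \<subseteq> (\<Union>u\<in>S. hB u)"
  proof
    fix b assume b: "b \<in> ?B"
    then have "b \<in> grid_verts 4 n" by (auto simp: grid_verts_def cart_verts_def path_verts_def)
    then obtain u where u: "u \<in> S" "grid_adj u b" using assms by (auto simp: total_dominating_def)
    obtain r j where bb: "b = (r,j)" by fastforce
    obtain a c where uu: "u = (a,c)" by fastforce
    have "a < 4" using u(1) SV uu by (auto simp: grid_mem)
    then have "b \<in> hB u" using b u(2) unfolding bb uu hB_def adj_iff by auto
    then show "b \<in> (\<Union>u\<in>S. hB u)" using u(1) by blast
  qed
  have cI: "?I \<subseteq> (\<Union>u\<in>S. hI u)"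
  proof
    fix b assume b: "b \<in> ?I"
    then have "b \<in> grid_verts 4 n" by (auto simp: grid_verts_def cart_verts_def path_verts_def)
    then obtain u where u: "u \<in> S" "grid_adj u b" using assms by (auto simp: total_dominating_def)
    obtain r j where bb: "b = (r,j)" by fastforce
    obtain a c where uu: "u = (a,c)" by fastforce
    have "a < 4" using u(1) SV uu by (auto simp: grid_mem)
    then have "b \<in> hI u" using b u(2) unfolding bb uu hI_def adj_iff by auto
    then show "b \<in> (\<Union>u\<in>S. hI u)" using u(1) by blast
  qed
  have "card ?B \<le> card (\<Union>u\<in>S. hB u)" using cB by (intro card_mono finite_UN_I fin) (auto simp: hB_def)
  also have "\<dots> \<le> (\<Sum>u\<in>S. card (hB u))" using fin by (rule card_UN_le)
  finally have 1: "card ?B \<le> (\<Sum>u\<in>S. card (hB u))" .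
  have "card ?I \<le> card (\<Union>u\<in>S. hI u)" using cI by (intro card_mono finite_UN_I fin) (auto simp: hI_def)
  also have "\<dots> \<le> (\<Sum>u\<in>S. card (hI u))" using fin by (rule card_UN_le)
  finally have 2: "card ?I \<le> (\<Sum>u\<in>S. card (hI u))" .
  have 3: "\<And>u. 2 * card (hB u) + card (hI u) \<le> 5"
  proof -
    fix u
    have "card (hB u) \<le> 2" by (simp add: hB_def card_insert_if)
    moreover have "card (hI u) \<le> 3" by (simp add: hI_def card_insert_if)
    moreover have "fst u \<in> {1,2} \<Longrightarrow> card (hB u) \<le> 1" by (auto simp: hB_def)
    moreover have "fst u \<notin> {1,2} \<Longrightarrow> card (hI u) \<le> 1" by (auto simp: hI_def)
    ultimately show "2 * card (hB u) + card (hI u) \<le> 5" by (cases "fst u \<in> {1,2}") auto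
  qed
  have "2 * card ?B + card ?I \<le> (\<Sum>u\<in>S. 2 * card (hB u) + card (hI u))"
  proof -
    have "(\<Sum>u\<in>S. 2 * card (hB u)) = 2 * (\<Sum>u\<in>S. card (hB u))" by (simp add: sum_distrib_left)
    then show ?thesis using 1 2 by (simp add: sum.distrib)
  qed
  also have "\<dots> \<le> card S * 5" using sum_bounded_above[of S "\<lambda>u. 2 * card (hB u) + card (hI u)" 5] 3 by auto
  finally show ?thesis by (simp add: card_cartesian_product)
qed

definition RR :: "(nat \<times> nat) set \<Rightarrow> nat \<times> nat \<Rightarrow> nat \<times> nat \<Rightarrow> bool" where
  "RR S = (\<lambda>a b. a \<in> S \<and> b \<in> S \<and> grid_adj a b)"

lemma RR_symp: "symp (RR S)"
  unfolding RR_def symp_def by (auto simp: grid_adj_def cart_adj_def path_adj_def)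

lemma RR_sym: "(RR S)\<^sup>*\<^sup>* x y \<Longrightarrow> (RR S)\<^sup>*\<^sup>* y x"
  using symp_rtranclp[OF RR_symp] by (meson sympD)

lemma row_conn_le:
  assumes "{r} \<times> {0..<n} \<subseteq> S" "i \<le> j" "j < n"
  shows "(RR S)\<^sup>*\<^sup>* (r,i) (r,j)"
  using assms(2,3)
proof (induction j rule: dec_induct)
  case base then show ?case by simp
next
  case (step k)
  have "RR S (r,k) (r, Suc k)" using step assms(1) by (auto simp: RR_def adj_iff)
  then show ?case using step by (meson rtranclp.rtrancl_into_rtrancl Suc_lessD)
qed

lemma row_conn:
  assumes "{r} \<times> {0..<n} \<subseteq> S" "i < n" "j < n"
  shows "(RR S)\<^sup>*\<^sup>* (r,i) (r,j)"
proof (cases "i \<le> j")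
  case True then show ?thesis using row_conn_le assms by blast
next
  case False then show ?thesis using row_conn_le[OF assms(1), of j i] assms RR_sym by simp
qed

lemma ic_RR: "induced_connected E S \<longleftrightarrow> S \<noteq> {} \<and> (\<forall>x\<in>S. \<forall>y\<in>S. (RR S)\<^sup>*\<^sup>* x y)" if "E = grid_adj"
  using that unfolding induced_connected_def RR_def by simp

lemma up3:
  assumes "n \<ge> 1"
  shows "domination_number (grid_verts 3 n) grid_adj \<le> n"
    and "connected_domination_number (grid_verts 3 n) grid_adj \<le> n"
proof -
  let ?S = "{1::nat} \<times> {0..<n}"
  have d: "dominating (grid_verts 3 n) grid_adj ?S"
    unfolding dominating_def
  proof (intro conjI ballI)
    show "?S \<subseteq> grid_verts 3 n" by (auto simp: grid_mem)
  next
    fix v assume v: "v \<in> grid_verts 3 n - ?S"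
    obtain r j where vv: "v = (r,j)" by fastforce
    show "\<exists>u\<in>?S. grid_adj u v"
      using v unfolding vv by (intro bexI[of _ "(1,j)"]) (auto simp: grid_mem adj_iff)
  qed
  have c: "induced_connected grid_adj ?S"
    unfolding ic_RR[OF refl] using assms row_conn[of 1 n ?S] by auto
  have cs: "card ?S = n" by (simp add: card_cartesian_product)
  show "domination_number (grid_verts 3 n) grid_adj \<le> n" using dn_le[OF d] cs by simp
  show "connected_domination_number (grid_verts 3 n) grid_adj \<le> n"
    using cdn_le[of _ _ ?S] d c cs by (simp add: connected_dominating_def)
qed

definition TT :: "nat \<Rightarrow> nat set" where
  "TT n = {j. j < n \<and> (j mod 3 = 1 \<or> (j = n - 1 \<and> j mod 3 = 0))}"

lemma TT_inj_aux:
  fixes x y n :: nat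
  assumes a: "x < n \<and> (x mod 3 = 1 \<or> x = n-1 \<and> x mod 3 = 0)" "y < n \<and> (y mod 3 = 1 \<or> y = n-1 \<and> y mod 3 = 0)" "x div 3 = y div 3"
  shows "x = y"
proof -
  have "3 * (x div 3) + x mod 3 = x" "3 * (y div 3) + y mod 3 = y" by (rule mult_div_mod_eq)+
  then show "x = y" using a by linarith
qed

lemma TT_bd_aux:
  fixes x n :: nat
  assumes a: "x < n \<and> (x mod 3 = 1 \<or> x = n-1 \<and> x mod 3 = 0)"
  shows "x div 3 < (n+2) div 3"
proof -
  have "3 * (x div 3) + x mod 3 = x" "3 * ((n+2) div 3) + (n+2) mod 3 = n+2" by (rule mult_div_mod_eq)+
  moreover have "(n+2) mod 3 < 3" by simp
  ultimately show "x div 3 < (n+2) div 3" using a by linarith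
qed

lemma card_TT: "card (TT n) \<le> (n + 2) div 3"
proof -
  have "inj_on (\<lambda>j. j div 3) (TT n)"
  proof (rule inj_onI)
    fix x y assume "x \<in> TT n" "y \<in> TT n" "x div 3 = y div 3"
    then show "x = y" by (intro TT_inj_aux[of x n y]) (simp_all add: TT_def)
  qed
  moreover have "(\<lambda>j. j div 3) ` TT n \<subseteq> {0..<(n+2) div 3}"
  proof (rule image_subsetI)
    fix x assume "x \<in> TT n"
    then show "x div 3 \<in> {0..<(n+2) div 3}" using TT_bd_aux[of x n] by (simp add: TT_def)
  qed
  ultimately show ?thesis using card_inj_on_le[of "\<lambda>j. j div 3" "TT n" "{0..<(n+2) div 3}"] by simp
qed

lemma mod3_a: "(j::nat) mod 3 = 2 \<Longrightarrow> j \<ge> 1 \<and> (j - 1) mod 3 = 1"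
proof -
  assume a: "j mod 3 = 2"
  have "3 * (j div 3) + j mod 3 = j" by (rule mult_div_mod_eq)
  then have "j - 1 = 1 + 3 * (j div 3)" "j \<ge> 1" using a by linarith+
  then show ?thesis by simp
qed

lemma mod3_b: "(j::nat) mod 3 = 0 \<Longrightarrow> (j + 1) mod 3 = 1"
proof -
  assume a: "j mod 3 = 0"
  have "3 * (j div 3) + j mod 3 = j" by (rule mult_div_mod_eq)
  then have "j + 1 = 1 + 3 * (j div 3)" using a by linarith
  then have "(j + 1) mod 3 = (1 + 3 * (j div 3)) mod 3" by (rule arg_cong)
  then show ?thesis by (simp only: mod_mult_self2) simp
qed

definition CC :: "nat \<Rightarrow> (nat \<times> nat) set" where
  "CC n = {1} \<times> {0..<n} \<union> {2,3} \<times> TT n"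

lemma CC_dom: "dominating (grid_verts 4 n) grid_adj (CC n)"
  unfolding dominating_def
proof (intro conjI ballI)
  show "CC n \<subseteq> grid_verts 4 n" by (auto simp: grid_mem CC_def TT_def)
next
  fix v assume v: "v \<in> grid_verts 4 n - CC n"
  obtain r j where vv: "v = (r,j)" by fastforce
  have rj: "r < 4" "j < n" using v vv by (auto simp: grid_mem)
  have nin: "(r,j) \<notin> CC n" using v vv by simp
  show "\<exists>u\<in>CC n. grid_adj u v"
  proof (cases "r = 3")
    case False
    have "(1::nat, j) \<in> CC n" using rj by (simp add: CC_def)
    moreover have "r \<noteq> 1" using nin rj by (auto simp: CC_def)
    then have "r = 0 \<or> r = 2" using False rj by linarith
    then have "grid_adj (1, j) v" using vv by (auto simp: adj_iff)
    ultimately show ?thesis by blast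
  next
    case r3: True
    have "j mod 3 \<noteq> 1" using nin rj r3 by (auto simp: CC_def TT_def)
    then consider "j mod 3 = 2" | "j mod 3 = 0" using mod_less_divisor[of 3 j] by linarith
    then show ?thesis
    proof cases
      case 1
      then have "(3, j - 1) \<in> CC n" using rj mod3_a[OF 1] by (auto simp: CC_def TT_def)
      moreover have "grid_adj (3, j-1) v" using mod3_a[OF 1] vv r3 by (auto simp: adj_iff)
      ultimately show ?thesis by blast
    next
      case 2
      have "j + 1 < n" using nin rj r3 2 by (auto simp: CC_def TT_def)
      then have "(3, j + 1) \<in> CC n" using rj mod3_b[OF 2] by (auto simp: CC_def TT_def)
      moreover have "grid_adj (3, j+1) v" using vv r3 by (auto simp: adj_iff)
      ultimately show ?thesis by blast
    qed
  qed
qed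

lemma CC_conn:
  assumes "n \<ge> 1"
  shows "induced_connected grid_adj (CC n)"
proof -
  have row: "{1} \<times> {0..<n} \<subseteq> CC n" by (auto simp: CC_def)
  have to_row: "(RR (CC n))\<^sup>*\<^sup>* x (1, snd x)" if x: "x \<in> CC n" for x
  proof -
    obtain r j where xx: "x = (r,j)" by fastforce
    have j: "j < n" using x xx by (auto simp: CC_def TT_def)
    consider "r = 1" | "r = 2" "j \<in> TT n" | "r = 3" "j \<in> TT n" using x xx by (auto simp: CC_def)
    then show ?thesis
    proof cases
      case 1 then show ?thesis using xx by simp
    next
      case 2
      have "RR (CC n) (2,j) (1,j)" using 2 j by (auto simp: RR_def CC_def adj_iff)
      then show ?thesis using xx 2 by auto
    next
      case 3
      have a: "RR (CC n) (3,j) (2,j)" using 3 j by (auto simp: RR_def CC_def adj_iff)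
      have b: "RR (CC n) (2,j) (1,j)" using 3 j by (auto simp: RR_def CC_def adj_iff)
      have "(RR (CC n))\<^sup>*\<^sup>* (3,j) (1,j)" using a b by (meson converse_rtranclp_into_rtranclp r_into_rtranclp)
      then show ?thesis using xx 3 by simp
    qed
  qed
  have sn: "snd x < n" if "x \<in> CC n" for x using that by (auto simp: CC_def TT_def)
  show ?thesis unfolding ic_RR[OF refl]
  proof (intro conjI ballI)
    show "CC n \<noteq> {}" using row assms by auto
  next
    fix x y assume xy: "x \<in> CC n" "y \<in> CC n"
    have "(RR (CC n))\<^sup>*\<^sup>* x (1, snd x)" using to_row xy by blast
    also have "(RR (CC n))\<^sup>*\<^sup>* (1, snd x) (1, snd y)" using row_conn[OF row] sn xy by blast
    also have "(RR (CC n))\<^sup>*\<^sup>* (1, snd y) y" using to_row xy RR_sym by blast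
    finally show "(RR (CC n))\<^sup>*\<^sup>* x y" .
  qed
qed

lemma CC_card: "card (CC n) \<le> n + 2 * ((n + 2) div 3)"
proof -
  have "card (CC n) \<le> card ({1::nat} \<times> {0..<n}) + card ({2::nat,3} \<times> TT n)"
    unfolding CC_def by (rule card_Un_le)
  also have "\<dots> = n + 2 * card (TT n)" by (simp add: card_cartesian_product)
  finally show ?thesis using card_TT[of n] by linarith
qed

definition pat :: "nat \<Rightarrow> nat" where
  "pat j = (if j mod 4 = 0 then 1 else if j mod 4 = 1 then 3 else if j mod 4 = 2 then 0 else 2)"

definition ee :: "nat \<Rightarrow> nat" where
  "ee n = (if n mod 4 = 1 then 3 else if n mod 4 = 2 then 0 else 2)"

definition DD :: "nat \<Rightarrow> (nat \<times> nat) set" where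
  "DD n = (\<lambda>j. (pat j, j)) ` {0..<n} \<union> {(ee n, n - 1)}"

lemma mod4_Suc: "Suc j mod 4 = (if j mod 4 = 3 then 0 else Suc (j mod 4))"
  by (simp add: mod_Suc)

lemma pred_mod4:
  assumes "(j::nat) \<ge> 1"
  shows "(j - 1) mod 4 = (if j mod 4 = 0 then 3 else j mod 4 - 1)"
proof -
  obtain i where ji: "j = Suc i" using assms by (cases j) auto
  have e: "Suc i mod 4 = (if i mod 4 = 3 then 0 else Suc (i mod 4))" by (rule mod4_Suc)
  show ?thesis unfolding ji using e by (cases "i mod 4 = 3") simp_all
qed

lemma pos4: "(j::nat) mod 4 \<noteq> 0 \<Longrightarrow> j \<ge> 1" by (cases j) auto

lemma DD_dom:
  assumes n1: "n \<ge> 1"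
  shows "dominating (grid_verts 4 n) grid_adj (DD n)"
  unfolding dominating_def
proof (intro conjI ballI)
  show "DD n \<subseteq> grid_verts 4 n" using n1 by (auto simp: grid_mem DD_def pat_def ee_def)
next
  fix v assume v: "v \<in> grid_verts 4 n - DD n"
  obtain r j where vv: "v = (r,j)" by fastforce
  have rj: "r < 4" "j < n" using v vv by (auto simp: grid_mem)
  have nin: "(r,j) \<notin> DD n" using v vv by simp
  have inP: "\<And>k. k < n \<Longrightarrow> (pat k, k) \<in> DD n" by (auto simp: DD_def)
  have inE: "(ee n, n - 1) \<in> DD n" by (simp add: DD_def)
  have W: "\<And>u. u \<in> DD n \<Longrightarrow> grid_adj u (r,j) \<Longrightarrow> \<exists>u\<in>DD n. grid_adj u v" using vv by blast
  consider "r = 0" | "r = 1" | "r = 2" | "r = 3" using rj by linarith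
  note rc = this
  consider "j mod 4 = 0" | "j mod 4 = 1" | "j mod 4 = 2" | "j mod 4 = 3" using mod_less_divisor[of 4 j] by linarith
  then show "\<exists>u\<in>DD n. grid_adj u v"
  proof cases
    case 1
    have p: "pat j = 1" using 1 by (simp add: pat_def)
    show ?thesis
    proof (cases rule: rc)
      case 1 then show ?thesis using W[of "(1,j)"] inP[of j] p rj by (simp add: adj_iff)
    next
      case 2 then show ?thesis using nin inP[of j] p rj by simp
    next
      case 3 then show ?thesis using W[of "(1,j)"] inP[of j] p rj by (simp add: adj_iff)
    next
      case r3: 4
      show ?thesis
      proof (cases "Suc j < n")
        case True
        have "pat (Suc j) = 3" using 1 by (simp add: pat_def mod4_Suc)
        then show ?thesis using W[of "(3, Suc j)"] inP[of "Suc j"] True r3 by (simp add: adj_iff)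
      next
        case False
        then have "n = Suc j" using rj by simp
        then have "ee n = 3" "n - 1 = j" using 1 by (simp_all add: ee_def mod4_Suc)
        then show ?thesis using nin inE r3 by simp
      qed
    qed
  next
    case 2
    have p: "pat j = 3" using 2 by (simp add: pat_def)
    have j1: "j \<ge> 1" using 2 by (intro pos4) simp
    have "(j - 1) mod 4 = 0" using 2 pred_mod4[OF j1] by simp
    then have pm: "pat (j - 1) = 1" by (simp add: pat_def)
    show ?thesis
    proof (cases rule: rc)
      case r0: 1
      show ?thesis
      proof (cases "Suc j < n")
        case True
        have "pat (Suc j) = 0" using 2 by (simp add: pat_def mod4_Suc)
        then show ?thesis using W[of "(0, Suc j)"] inP[of "Suc j"] True r0 by (simp add: adj_iff)
      next
        case False
        then have "n = Suc j" using rj by simp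
        then have "ee n = 0" "n - 1 = j" using 2 by (simp_all add: ee_def mod4_Suc)
        then show ?thesis using nin inE r0 by simp
      qed
    next
      case 2 then show ?thesis using W[of "(1,j-1)"] inP[of "j-1"] pm rj j1 by (simp add: adj_iff)
    next
      case 3 then show ?thesis using W[of "(3,j)"] inP[of j] p rj by (simp add: adj_iff)
    next
      case 4 then show ?thesis using nin inP[of j] p rj by simp
    qed
  next
    case 3
    have p: "pat j = 0" using 3 by (simp add: pat_def)
    have j1: "j \<ge> 1" using 3 by (intro pos4) simp
    have "(j - 1) mod 4 = 1" using 3 pred_mod4[OF j1] by simp
    then have pm: "pat (j - 1) = 3" by (simp add: pat_def)
    show ?thesis
    proof (cases rule: rc)
      case 1 then show ?thesis using nin inP[of j] p rj by simp
    next
      case 2 then show ?thesis using W[of "(0,j)"] inP[of j] p rj by (simp add: adj_iff)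
    next
      case r2: 3
      show ?thesis
      proof (cases "Suc j < n")
        case True
        have "pat (Suc j) = 2" using 3 by (simp add: pat_def mod4_Suc)
        then show ?thesis using W[of "(2, Suc j)"] inP[of "Suc j"] True r2 by (simp add: adj_iff)
      next
        case False
        then have "n = Suc j" using rj by simp
        then have "ee n = 2" "n - 1 = j" using 3 by (simp_all add: ee_def mod4_Suc)
        then show ?thesis using nin inE r2 by simp
      qed
    next
      case 4 then show ?thesis using W[of "(3,j-1)"] inP[of "j-1"] pm rj j1 by (simp add: adj_iff)
    qed
  next
    case 4
    have p: "pat j = 2" using 4 by (simp add: pat_def)
    have j1: "j \<ge> 1" using 4 by (intro pos4) simp
    have "(j - 1) mod 4 = 2" using 4 pred_mod4[OF j1] by simp
    then have pm: "pat (j - 1) = 0" by (simp add: pat_def)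
    show ?thesis
    proof (cases rule: rc)
      case 1 then show ?thesis using W[of "(0,j-1)"] inP[of "j-1"] pm rj j1 by (simp add: adj_iff)
    next
      case 2 then show ?thesis using W[of "(2,j)"] inP[of j] p rj by (simp add: adj_iff)
    next
      case 3 then show ?thesis using nin inP[of j] p rj by simp
    next
      case 4 then show ?thesis using W[of "(2,j)"] inP[of j] p rj by (simp add: adj_iff)
    qed
  qed
qed

lemma DD_card:
  assumes "n \<ge> 1"
  shows "card (DD n) \<le> n + (if n mod 4 = 0 then 0 else 1)"
proof (cases "n mod 4 = 0")
  case True
  have "(n - 1) mod 4 = 3" using True pred_mod4[OF assms] by simp
  then have "pat (n - 1) = 2" "ee n = 2" using True by (simp_all add: pat_def ee_def)
  then have "(ee n, n - 1) \<in> (\<lambda>j. (pat j, j)) ` {0..<n}" using assms by force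
  then have "DD n = (\<lambda>j. (pat j, j)) ` {0..<n}" unfolding DD_def by blast
  then show ?thesis using card_image_le[of "{0..<n}" "\<lambda>j. (pat j, j)"] True by simp
next
  case False
  have "card (DD n) \<le> card ((\<lambda>j. (pat j, j)) ` {0..<n}) + card {(ee n, n - 1)}"
    unfolding DD_def by (rule card_Un_le)
  then show ?thesis using card_image_le[of "{0..<n}" "\<lambda>j. (pat j, j)"] False by simp
qed

lemma tdn_att:
  assumes "total_dominating V E S0"
  shows "\<exists>S. total_dominating V E S \<and> card S = total_domination_number V E"
proof -
  have "\<exists>k S. total_dominating V E S \<and> card S = k" using assms by blast
  then show ?thesis unfolding total_domination_number_def by (rule LeastI_ex)
qed

lemma final_ceil:
  fixes g c t :: nat
  assumes "3 * g + 2 * c \<le> 6 * t"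
  shows "int t \<ge> \<lceil>(3 * real g + 2 * real c) / 6\<rceil>"
proof -
  have "real (3 * g + 2 * c) \<le> real (6 * t)" using assms by (simp only: of_nat_le_iff)
  then have "(3 * real g + 2 * real c) / 6 \<le> real t" by simp
  then show ?thesis by (simp add: ceiling_le_iff)
qed

theorem proposition2p16:
  fixes m n :: nat
  assumes "(m = 3 \<and> n \<ge> 3) \<or> (m = 4 \<and> n \<ge> 4)"
  shows "int (total_domination_number (grid_verts m n) grid_adj)
    \<ge> \<lceil>(3 * real (domination_number (grid_verts m n) grid_adj)
                 + 2 * real (connected_domination_number (grid_verts m n) grid_adj)) / 6\<rceil>"
  using assms
proof
  assume a: "m = 3 \<and> n \<ge> 3"
  then have m: "m = 3" and n: "n \<ge> 3" by auto
  have t: "n \<le> total_domination_number (grid_verts 3 n) grid_adj"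
    using tdn_ge[OF tot_ex[of 3 n]] lb3 by simp
  have g: "domination_number (grid_verts 3 n) grid_adj \<le> n" using up3 n by simp
  have c: "connected_domination_number (grid_verts 3 n) grid_adj \<le> n" using up3 n by simp
  show ?thesis unfolding m by (rule final_ceil) (use t g c in linarith)
next
  assume a: "m = 4 \<and> n \<ge> 4"
  then have m: "m = 4" and n: "n \<ge> 4" by auto
  define t where "t = total_domination_number (grid_verts 4 n) grid_adj"
  define g where "g = domination_number (grid_verts 4 n) grid_adj"
  define c where "c = connected_domination_number (grid_verts 4 n) grid_adj"
  have t6: "6 * n \<le> 5 * t"
    using tdn_att[OF tot_ex[of 4 n]] lb4 unfolding t_def by fastforce
  have g1: "g \<le> n + (if n mod 4 = 0 then 0 else 1)"
    unfolding g_def using dn_le[OF DD_dom] DD_card n by (meson le_trans one_le_numeral order.trans [of 1 4 n])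
  have c1: "c \<le> n + 2 * ((n + 2) div 3)"
    unfolding c_def using cdn_le[of _ _ "CC n"] CC_dom CC_conn CC_card n
    by (meson connected_dominating_def le_trans one_le_numeral order.trans [of 1 4 n])
  have key: "3 * g + 2 * c \<le> 6 * t"
  proof (cases "n \<le> 6")
    case True
    then consider "n = 4" | "n = 5" | "n = 6" using n by linarith
    then show ?thesis using g1 c1 t6 by cases simp_all
  next
    case False
    have g2: "g \<le> n + 1" using g1 by (simp split: if_splits)
    have q: "(n + 2) div 3 * 3 \<le> n + 2" by (rule div_times_less_eq_dividend)
    show ?thesis using g2 c1 t6 q False by linarith
  qed
  show ?thesis unfolding m using final_ceil[OF key] unfolding t_def g_def c_def .
qed

end
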